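(* Let $A$ be an associative unital algebra and $(H,\pi_r,\psi_r)$ a right twisting datum for $A$, where $H$ is a Hopf algebra with bijective antipode $S$. Define $\pi_l:H^{op}\otimes A\to A$, $\pi_l(h\otimes a)=a\cdot h$, and $\psi_l:A\to H^{op}\otimes A$, $\psi_l(a)=S^{-1}(a_{<1>})\otimes a_{<0>}$. Then $(H^{op},\pi_l,\psi_l)$ is a left twisting datum for $A$, and the map $\lambda:(A,\diamond)\to(A,\star)$, $\lambda(a)=a_{<0>}\cdot S^{-1}(a_{<1>})$, is an algebra isomorphism with inverse $\lambda^{-1}(a)=a_{<0>}\cdot a_{<1>}$.
   Context: Work over a field $k$. A right twisting datum $(H,\pi_r,\psi_r)$ for an algebra $A$ ($H$ a bialgebra): $A$ is a right $H$-module algebra (action $\pi_r(a\otimes h)=a\cdot h$, with $(ab)\cdot h=(a\cdot h_1)(b\cdot h_2)$, $1\cdot h=\varepsilon(h)1$) and a right $H$-comodule algebra (coaction $\psi_r(a)=a_{<0>}\otimes a_{<1>}$, an algebra map) with $(a\cdot h)_{<0>}\otimes(a\cdot h)_{<1>}=a_{<0>}\cdot h\otimes a_{<1>}$; the right twisted product is $a\diamond b=(a\cdot b_{<1>})b_{<0>}$. A left twisting datum $(K,\pi,\psi)$ for $A$: $A$ a left $K$-module algebra ($k\cdot a$) and left $K$-comodule algebra ($a\mapsto a_{(-1)}\otimes a_{(0)}$) with $(k\cdot a)_{(-1)}\otimes(k\cdot a)_{(0)}=a_{(-1)}\otimes k\cdot a_{(0)}$; the left twisted product is $a\star b=a_{(0)}(a_{(-1)}\cdot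 b)$. Here $\star$ is the left twisted product for $(H^{op},\pi_l,\psi_l)$, so $a\star b=a_{<0>}(b\cdot S^{-1}(a_{<1>}))$. *)

theory Defs
  imports Complex_Main
begin

(* Vector spaces over a field 'k are types 'v::ab_group_add with a scalar
   multiplication s :: 'k => 'v => 'v satisfying the locale vector_space.
   An element of V (x) W is represented by a finite list of simple tensors
   [(v1,w1),...,(vn,wn)] meaning sum_i vi (x) wi; two representatives are equal as tensors
   iff all bilinear functionals V x W -> k agree on them (faithful over a field).
   Coproducts, coactions are maps into such representatives (Sweedler notation). *)

definition klinear :: "('k::field \<Rightarrow> 'v::ab_group_add \<Rightarrow> 'v) \<Rightarrow> ('k \<Rightarrow> 'w::ab_group_add \<Rightarrow> 'w) \<Rightarrow> ('v \<Rightarrow> 'w) \<Rightarrow> bool" where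
  "klinear s1 s2 f \<longleftrightarrow> (\<forall>x y. f (x + y) = f x + f y) \<and> (\<forall>c x. f (s1 c x) = s2 c (f x))"

definition bilin :: "('k::field \<Rightarrow> 'v::ab_group_add \<Rightarrow> 'v) \<Rightarrow> ('k \<Rightarrow> 'w::ab_group_add \<Rightarrow> 'w)
    \<Rightarrow> ('v \<Rightarrow> 'w \<Rightarrow> 'k) \<Rightarrow> bool" where
  "bilin s1 s2 f \<longleftrightarrow> (\<forall>w. klinear s1 (*) (\<lambda>v. f v w)) \<and> (\<forall>v. klinear s2 (*) (\<lambda>w. f v w))"

definition trilin :: "('k::field \<Rightarrow> 'u::ab_group_add \<Rightarrow> 'u) \<Rightarrow> ('k \<Rightarrow> 'v::ab_group_add \<Rightarrow> 'v)
    \<Rightarrow> ('k \<Rightarrow> 'w::ab_group_add \<Rightarrow> 'w) \<Rightarrow> ('u \<Rightarrow> 'v \<Rightarrow> 'w \<Rightarrow> 'k) \<Rightarrow> bool" where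
  "trilin s1 s2 s3 f \<longleftrightarrow> (\<forall>v w. klinear s1 (*) (\<lambda>u. f u v w)) \<and> (\<forall>u w. klinear s2 (*) (\<lambda>v. f u v w))
      \<and> (\<forall>u v. klinear s3 (*) (\<lambda>w. f u v w))"

definition teq2 :: "('k::field \<Rightarrow> 'v::ab_group_add \<Rightarrow> 'v) \<Rightarrow> ('k \<Rightarrow> 'w::ab_group_add \<Rightarrow> 'w)
    \<Rightarrow> ('v \<times> 'w) list \<Rightarrow> ('v \<times> 'w) list \<Rightarrow> bool" where
  "teq2 s1 s2 xs ys \<longleftrightarrow> (\<forall>f. bilin s1 s2 f \<longrightarrow>
      sum_list (map (\<lambda>(v,w). f v w) xs) = sum_list (map (\<lambda>(v,w). f v w) ys))"

definition teq3 :: "('k::field \<Rightarrow> 'u::ab_group_add \<Rightarrow> 'u) \<Rightarrow> ('k \<Rightarrow> 'v::ab_group_add \<Rightarrow> 'v)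
    \<Rightarrow> ('k \<Rightarrow> 'w::ab_group_add \<Rightarrow> 'w) \<Rightarrow> ('u \<times> 'v \<times> 'w) list \<Rightarrow> ('u \<times> 'v \<times> 'w) list \<Rightarrow> bool" where
  "teq3 s1 s2 s3 xs ys \<longleftrightarrow> (\<forall>f. trilin s1 s2 s3 f \<longrightarrow>
      sum_list (map (\<lambda>(u,v,w). f u v w) xs) = sum_list (map (\<lambda>(u,v,w). f u v w) ys))"

definition kalg :: "('k::field \<Rightarrow> 'a::ab_group_add \<Rightarrow> 'a) \<Rightarrow> ('a \<Rightarrow> 'a \<Rightarrow> 'a) \<Rightarrow> 'a \<Rightarrow> bool" where
  "kalg s m u \<longleftrightarrow> vector_space s
     \<and> (\<forall>x y z. m (m x y) z = m x (m y z))
     \<and> (\<forall>x. m u x = x \<and> m x u = x)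
     \<and> (\<forall>x y z. m x (y + z) = m x y + m x z \<and> m (x + y) z = m x z + m y z)
     \<and> (\<forall>c x y. m (s c x) y = s c (m x y) \<and> m x (s c y) = s c (m x y))"

definition bialg :: "('k::field \<Rightarrow> 'h::ab_group_add \<Rightarrow> 'h) \<Rightarrow> ('h \<Rightarrow> 'h \<Rightarrow> 'h) \<Rightarrow> 'h
    \<Rightarrow> ('h \<Rightarrow> ('h \<times> 'h) list) \<Rightarrow> ('h \<Rightarrow> 'k) \<Rightarrow> bool" where
  "bialg s m u D e \<longleftrightarrow> kalg s m u
     \<and> (\<forall>x y. teq2 s s (D (x + y)) (D x @ D y))
     \<and> (\<forall>c x. teq2 s s (D (s c x)) (map (\<lambda>(a,b). (s c a, b)) (D x)))
     \<and> (\<forall>x. teq3 s s s [(a1, a2, b). (a,b) \<leftarrow> D x, (a1,a2) \<leftarrow> D a]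
                        [(a, b1, b2). (a,b) \<leftarrow> D x, (b1,b2) \<leftarrow> D b])
     \<and> klinear s (*) e
     \<and> (\<forall>x. sum_list (map (\<lambda>(a,b). s (e a) b) (D x)) = x
          \<and> sum_list (map (\<lambda>(a,b). s (e b) a) (D x)) = x)
     \<and> (\<forall>x y. teq2 s s (D (m x y)) [(m a c, m b d). (a,b) \<leftarrow> D x, (c,d) \<leftarrow> D y])
     \<and> teq2 s s (D u) [(u, u)]
     \<and> (\<forall>x y. e (m x y) = e x * e y) \<and> e u = 1"

definition hopf :: "('k::field \<Rightarrow> 'h::ab_group_add \<Rightarrow> 'h) \<Rightarrow> ('h \<Rightarrow> 'h \<Rightarrow> 'h) \<Rightarrow> 'h
    \<Rightarrow> ('h \<Rightarrow> ('h \<times> 'h) list) \<Rightarrow> ('h \<Rightarrow> 'k) \<Rightarrow> ('h \<Rightarrow> 'h) \<Rightarrow> bool" where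
  "hopf s m u D e S \<longleftrightarrow> bialg s m u D e \<and> klinear s s S
     \<and> (\<forall>x. sum_list (map (\<lambda>(a,b). m (S a) b) (D x)) = s (e x) u
          \<and> sum_list (map (\<lambda>(a,b). m a (S b)) (D x)) = s (e x) u)"

text \<open>Right twisting datum (H, act, psi) for the algebra (sA, mA, uA):
  act a h = a . h,  psi a = [(a_<0>, a_<1>)].\<close>
definition right_twisting_datum ::
  "('k::field \<Rightarrow> 'a::ab_group_add \<Rightarrow> 'a) \<Rightarrow> ('a \<Rightarrow> 'a \<Rightarrow> 'a) \<Rightarrow> 'a
   \<Rightarrow> ('k \<Rightarrow> 'h::ab_group_add \<Rightarrow> 'h) \<Rightarrow> ('h \<Rightarrow> 'h \<Rightarrow> 'h) \<Rightarrow> 'h \<Rightarrow> ('h \<Rightarrow> ('h \<times> 'h) list) \<Rightarrow> ('h \<Rightarrow> 'k)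
   \<Rightarrow> ('a \<Rightarrow> 'h \<Rightarrow> 'a) \<Rightarrow> ('a \<Rightarrow> ('a \<times> 'h) list) \<Rightarrow> bool" where
  "right_twisting_datum sA mA uA sH mH uH D e act psi \<longleftrightarrow>
     kalg sA mA uA \<and> bialg sH mH uH D e
     \<comment> \<open>right H-module algebra\<close>
     \<and> (\<forall>h. klinear sA sA (\<lambda>a. act a h)) \<and> (\<forall>a. klinear sH sA (\<lambda>h. act a h))
     \<and> (\<forall>a. act a uH = a) \<and> (\<forall>a h g. act a (mH h g) = act (act a h) g)
     \<and> (\<forall>a b h. act (mA a b) h = sum_list (map (\<lambda>(h1,h2). mA (act a h1) (act b h2)) (D h)))
     \<and> (\<forall>h. act uA h = sA (e h) uA)
     \<comment> \<open>right H-comodule algebra\<close>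
     \<and> (\<forall>a b. teq2 sA sH (psi (a + b)) (psi a @ psi b))
     \<and> (\<forall>c a. teq2 sA sH (psi (sA c a)) (map (\<lambda>(x,y). (sA c x, y)) (psi a)))
     \<and> (\<forall>a. teq3 sA sH sH [(x0, x1, y). (x,y) \<leftarrow> psi a, (x0,x1) \<leftarrow> psi x]
                           [(x, y1, y2). (x,y) \<leftarrow> psi a, (y1,y2) \<leftarrow> D y])
     \<and> (\<forall>a. sum_list (map (\<lambda>(x,y). sA (e y) x) (psi a)) = a)
     \<and> (\<forall>a b. teq2 sA sH (psi (mA a b)) [(mA x z, mH y w). (x,y) \<leftarrow> psi a, (z,w) \<leftarrow> psi b])
     \<and> teq2 sA sH (psi uA) [(uA, uH)]
     \<comment> \<open>compatibility\<close>
     \<and> (\<forall>a h. teq2 sA sH (psi (act a h)) (map (\<lambda>(x,y). (act x h, y)) (psi a)))"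

text \<open>Left twisting datum (K, lact, psi) for (sA, mA, uA):
  lact k a = k . a,  psi a = [(a_(-1), a_(0))].\<close>
definition left_twisting_datum ::
  "('k::field \<Rightarrow> 'a::ab_group_add \<Rightarrow> 'a) \<Rightarrow> ('a \<Rightarrow> 'a \<Rightarrow> 'a) \<Rightarrow> 'a
   \<Rightarrow> ('k \<Rightarrow> 'h::ab_group_add \<Rightarrow> 'h) \<Rightarrow> ('h \<Rightarrow> 'h \<Rightarrow> 'h) \<Rightarrow> 'h \<Rightarrow> ('h \<Rightarrow> ('h \<times> 'h) list) \<Rightarrow> ('h \<Rightarrow> 'k)
   \<Rightarrow> ('h \<Rightarrow> 'a \<Rightarrow> 'a) \<Rightarrow> ('a \<Rightarrow> ('h \<times> 'a) list) \<Rightarrow> bool" where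
  "left_twisting_datum sA mA uA sK mK uK D e lact psi \<longleftrightarrow>
     kalg sA mA uA \<and> bialg sK mK uK D e
     \<comment> \<open>left K-module algebra\<close>
     \<and> (\<forall>k. klinear sA sA (\<lambda>a. lact k a)) \<and> (\<forall>a. klinear sK sA (\<lambda>k. lact k a))
     \<and> (\<forall>a. lact uK a = a) \<and> (\<forall>a k l. lact (mK k l) a = lact k (lact l a))
     \<and> (\<forall>a b k. lact k (mA a b) = sum_list (map (\<lambda>(k1,k2). mA (lact k1 a) (lact k2 b)) (D k)))
     \<and> (\<forall>k. lact k uA = sA (e k) uA)
     \<comment> \<open>left K-comodule algebra\<close>
     \<and> (\<forall>a b. teq2 sK sA (psi (a + b)) (psi a @ psi b))
     \<and> (\<forall>c a. teq2 sK sA (psi (sA c a)) (map (\<lambda>(y,x). (y, sA c x)) (psi a)))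
     \<and> (\<forall>a. teq3 sK sK sA [(y, x1, x0). (y,x) \<leftarrow> psi a, (x1,x0) \<leftarrow> psi x]
                           [(y1, y2, x). (y,x) \<leftarrow> psi a, (y1,y2) \<leftarrow> D y])
     \<and> (\<forall>a. sum_list (map (\<lambda>(y,x). sA (e y) x) (psi a)) = a)
     \<and> (\<forall>a b. teq2 sK sA (psi (mA a b)) [(mK y w, mA x z). (y,x) \<leftarrow> psi a, (w,z) \<leftarrow> psi b])
     \<and> teq2 sK sA (psi uA) [(uK, uA)]
     \<comment> \<open>compatibility\<close>
     \<and> (\<forall>a k. teq2 sK sA (psi (lact k a)) (map (\<lambda>(y,x). (y, lact k x)) (psi a)))"

definition right_twisted_prod :: "('a \<Rightarrow> 'a \<Rightarrow> 'a) \<Rightarrow> ('a \<Rightarrow> 'h \<Rightarrow> 'a) \<Rightarrow> ('a \<Rightarrow> ('a \<times> 'h) list)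
    \<Rightarrow> 'a \<Rightarrow> 'a \<Rightarrow> 'a::ab_group_add" where
  "right_twisted_prod mA act psi a b = sum_list (map (\<lambda>(x,y). mA (act a y) x) (psi b))"

definition left_twisted_prod :: "('a \<Rightarrow> 'a \<Rightarrow> 'a) \<Rightarrow> ('h \<Rightarrow> 'a \<Rightarrow> 'a) \<Rightarrow> ('a \<Rightarrow> ('h \<times> 'a) list)
    \<Rightarrow> 'a \<Rightarrow> 'a \<Rightarrow> 'a::ab_group_add" where
  "left_twisted_prod mA lact psi a b = sum_list (map (\<lambda>(y,x). mA x (lact y b)) (psi a))"

end

theory Submission
  imports Defs
begin

lemma vs_field: "vector_space ((*) :: 'k::field \<Rightarrow> 'k \<Rightarrow> 'k)"
  by unfold_locales (auto simp: algebra_simps)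

lemma sep:
  fixes s :: "'k::field \<Rightarrow> 'v::ab_group_add \<Rightarrow> 'v"
  assumes vs: "vector_space s" and h: "\<And>\<phi>. klinear s (*) \<phi> \<Longrightarrow> \<phi> x = \<phi> y"
  shows "x = y"
proof (rule ccontr)
  assume ne: "x \<noteq> y"
  interpret vector_space_pair s "(*) :: 'k \<Rightarrow> 'k \<Rightarrow> 'k"
    using vs vs_field by (simp add: vector_space_pair_def)
  have "vs1.independent {x - y}" using ne by simp
  from linear_independent_extend[OF this, of "\<lambda>_. 1"]
  obtain g where g: "Vector_Spaces.linear s (*) g" "g (x - y) = 1" by auto
  have kl: "klinear s (*) g" using g(1) by (simp add: Vector_Spaces.linear_iff klinear_def)
  have "g x = g ((x - y) + y)" by simp
  also have "\<dots> = g (x - y) + g y" using kl unfolding klinear_def by blast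
  finally have "g x = 1 + g y" using g by simp
  with h[OF kl] show False by simp
qed

lemma klin_zero: "klinear s1 s2 f \<Longrightarrow> f 0 = 0"
  unfolding klinear_def by (metis add_cancel_right_right add_0)

lemma klin_add: "klinear s1 s2 f \<Longrightarrow> f (x + y) = f x + f y"
  unfolding klinear_def by blast

lemma klin_scale: "klinear s1 s2 f \<Longrightarrow> f (s1 c x) = s2 c (f x)"
  unfolding klinear_def by blast

lemma klin_sum: "klinear s1 s2 f \<Longrightarrow> f (sum_list (map g xs)) = sum_list (map (\<lambda>x. f (g x)) xs)"
  by (induction xs) (auto simp: klin_zero klin_add)

lemma vs_sum_scale:
  assumes "vector_space s"
  shows "sum_list (map (\<lambda>x. s c (f x)) xs) = s c (sum_list (map f xs))"
proof -
  interpret vector_space s by fact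
  show ?thesis by (induction xs) (auto simp: scale_right_distrib)
qed

lemma sum_list_swap:
  "sum_list (map (\<lambda>a. sum_list (map (\<lambda>b. (f a b :: 'c::comm_monoid_add)) ys)) xs) = sum_list (map (\<lambda>b. sum_list (map (\<lambda>a. f a b) xs)) ys)"
  by (induction xs) (auto simp: sum_list_addf)

lemma sum_list_concat_map:
  "sum_list (map g (concat xss)) = sum_list (map (\<lambda>xs. sum_list (map g xs)) xss)"
  by (induction xss) auto

lemma swap3:
  "sum_list (map (\<lambda>p. sum_list (map (\<lambda>b. sum_list (map (\<lambda>q. (f p b q :: 'c::comm_monoid_add)) (ys b))) xs)) zs)
   = sum_list (map (\<lambda>b. sum_list (map (\<lambda>q. sum_list (map (\<lambda>p. f p b q) zs)) (ys b))) xs)"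
proof -
  have "sum_list (map (\<lambda>p. sum_list (map (\<lambda>b. sum_list (map (\<lambda>q. f p b q) (ys b))) xs)) zs)
      = sum_list (map (\<lambda>b. sum_list (map (\<lambda>p. sum_list (map (\<lambda>q. f p b q) (ys b))) zs)) xs)"
    by (rule sum_list_swap)
  also have "\<dots> = sum_list (map (\<lambda>b. sum_list (map (\<lambda>q. sum_list (map (\<lambda>p. f p b q) zs)) (ys b))) xs)"
    by (simp only: sum_list_swap[of _ "ys _"])
  finally show ?thesis .
qed

lemma swap2: "sum_list (map (\<lambda>p. sum_list (map (\<lambda>b. (f p b :: 'c::comm_monoid_add)) xs)) zs)
   = sum_list (map (\<lambda>b. sum_list (map (\<lambda>p. f p b) zs)) xs)"
  by (rule sum_list_swap)

lemma sum_cong: "(\<And>x. x \<in> set xs \<Longrightarrow> f x = g x) \<Longrightarrow> sum_list (map f xs) = sum_list (map g xs)"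
  by (metis map_cong)

lemma teq2_tr:
  assumes t: "teq2 s1 s2 xs ys" and vs: "vector_space sT"
    and l1: "\<And>w. klinear s1 sT (\<lambda>v. F v w)" and l2: "\<And>v. klinear s2 sT (\<lambda>w. F v w)"
  shows "sum_list (map (\<lambda>z. F (fst z) (snd z)) xs) = sum_list (map (\<lambda>z. F (fst z) (snd z)) ys)"
proof (rule sep[OF vs])
  fix \<phi> assume p: "klinear sT (*) \<phi>"
  have "bilin s1 s2 (\<lambda>v w. \<phi> (F v w))"
    unfolding bilin_def klinear_def
    using klin_add[OF p] klin_scale[OF p] klin_add[OF l1] klin_scale[OF l1]
      klin_add[OF l2] klin_scale[OF l2] by simp
  with t have "sum_list (map (\<lambda>(v,w). \<phi> (F v w)) xs) = sum_list (map (\<lambda>(v,w). \<phi> (F v w)) ys)"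
    unfolding teq2_def by blast
  then show "\<phi> (sum_list (map (\<lambda>z. F (fst z) (snd z)) xs)) = \<phi> (sum_list (map (\<lambda>z. F (fst z) (snd z)) ys))"
    by (simp add: klin_sum[OF p] split_def)
qed

lemma teq3_tr:
  assumes t: "teq3 s1 s2 s3 xs ys" and vs: "vector_space sT"
    and l1: "\<And>v w. klinear s1 sT (\<lambda>u. F u v w)" and l2: "\<And>u w. klinear s2 sT (\<lambda>v. F u v w)"
    and l3: "\<And>u v. klinear s3 sT (\<lambda>w. F u v w)"
  shows "sum_list (map (\<lambda>z. F (fst z) (fst (snd z)) (snd (snd z))) xs)
       = sum_list (map (\<lambda>z. F (fst z) (fst (snd z)) (snd (snd z))) ys)"
proof (rule sep[OF vs])
  fix \<phi> assume p: "klinear sT (*) \<phi>"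
  have "trilin s1 s2 s3 (\<lambda>u v w. \<phi> (F u v w))"
    unfolding trilin_def klinear_def
    using klin_add[OF p] klin_scale[OF p] klin_add[OF l1] klin_scale[OF l1]
      klin_add[OF l2] klin_scale[OF l2] klin_add[OF l3] klin_scale[OF l3] by simp
  with t have "sum_list (map (\<lambda>(u,v,w). \<phi> (F u v w)) xs) = sum_list (map (\<lambda>(u,v,w). \<phi> (F u v w)) ys)"
    unfolding teq3_def by blast
  then show "\<phi> (sum_list (map (\<lambda>z. F (fst z) (fst (snd z)) (snd (snd z))) xs)) = \<phi> (sum_list (map (\<lambda>z. F (fst z) (fst (snd z)) (snd (snd z))) ys))"
    by (simp add: klin_sum[OF p] split_def)
qed

lemma teq2_refl: "teq2 s1 s2 xs xs" by (simp add: teq2_def)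
lemma teq2_sym: "teq2 s1 s2 xs ys \<Longrightarrow> teq2 s1 s2 ys xs" by (simp add: teq2_def)
lemma teq2_trans: "teq2 s1 s2 xs ys \<Longrightarrow> teq2 s1 s2 ys zs \<Longrightarrow> teq2 s1 s2 xs zs" by (simp add: teq2_def)

lemma teq2_I:
  assumes "\<And>f. bilin s1 s2 f \<Longrightarrow> sum_list (map (\<lambda>z. f (fst z) (snd z)) xs) = sum_list (map (\<lambda>z. f (fst z) (snd z)) ys)"
  shows "teq2 s1 s2 xs ys"
  using assms unfolding teq2_def by (simp add: split_def)

lemma teq3_I:
  assumes "\<And>f. trilin s1 s2 s3 f \<Longrightarrow> sum_list (map (\<lambda>z. f (fst z) (fst (snd z)) (snd (snd z))) xs) = sum_list (map (\<lambda>z. f (fst z) (fst (snd z)) (snd (snd z))) ys)"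
  shows "teq3 s1 s2 s3 xs ys"
  using assms unfolding teq3_def by (simp add: split_def)

lemma bilinD1: "bilin s1 s2 f \<Longrightarrow> klinear s1 (*) (\<lambda>v. f v w)" by (simp add: bilin_def)
lemma bilinD2: "bilin s1 s2 f \<Longrightarrow> klinear s2 (*) (\<lambda>w. f v w)" by (simp add: bilin_def)
lemma trilinD1: "trilin s1 s2 s3 f \<Longrightarrow> klinear s1 (*) (\<lambda>u. f u v w)" by (simp add: trilin_def)
lemma trilinD2: "trilin s1 s2 s3 f \<Longrightarrow> klinear s2 (*) (\<lambda>v. f u v w)" by (simp add: trilin_def)
lemma trilinD3: "trilin s1 s2 s3 f \<Longrightarrow> klinear s3 (*) (\<lambda>w. f u v w)" by (simp add: trilin_def)

lemma bilin_simps: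
  assumes "bilin s1 s2 f"
  shows "f (x + y) w = f x w + f y w" "f w' (x' + y') = f w' x' + f w' y'"
    "f (s1 c x) w = c * f x w" "f w' (s2 c x') = c * f w' x'"
  using klin_add[OF bilinD1[OF assms]] klin_add[OF bilinD2[OF assms]]
    klin_scale[OF bilinD1[OF assms]] klin_scale[OF bilinD2[OF assms]] by auto

lemma trilin_simps:
  assumes "trilin s1 s2 s3 f"
  shows "f (x + y) v w = f x v w + f y v w" "f u (x' + y') w = f u x' w + f u y' w"
    "f u v (x'' + y'') = f u v x'' + f u v y''"
    "f (s1 c x) v w = c * f x v w" "f u (s2 c x') w = c * f u x' w" "f u v (s3 c x'') = c * f u v x''"
  using klin_add[OF trilinD1[OF assms]] klin_add[OF trilinD2[OF assms]] klin_add[OF trilinD3[OF assms]]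
    klin_scale[OF trilinD1[OF assms]] klin_scale[OF trilinD2[OF assms]] klin_scale[OF trilinD3[OF assms]] by auto

locale HA =
  fixes s :: "'k::field \<Rightarrow> 'h::ab_group_add \<Rightarrow> 'h" and m :: "'h \<Rightarrow> 'h \<Rightarrow> 'h" and u :: 'h
    and D :: "'h \<Rightarrow> ('h \<times> 'h) list" and e :: "'h \<Rightarrow> 'k" and S :: "'h \<Rightarrow> 'h"
  assumes hopf: "hopf s m u D e S"
begin

lemma vs: "vector_space s" using hopf by (simp add: hopf_def bialg_def kalg_def)
lemma m_assoc: "m (m x y) z = m x (m y z)" using hopf by (simp add: hopf_def bialg_def kalg_def)
lemma m_u1[simp]: "m u x = x" using hopf by (simp add: hopf_def bialg_def kalg_def)
lemma m_u2[simp]: "m x u = x" using hopf by (simp add: hopf_def bialg_def kalg_def)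
lemma m_addR[simp]: "m x (y + z) = m x y + m x z" using hopf by (simp add: hopf_def bialg_def kalg_def)
lemma m_addL[simp]: "m (x + y) z = m x z + m y z" using hopf by (simp add: hopf_def bialg_def kalg_def)
lemma m_scaleL[simp]: "m (s c x) y = s c (m x y)" using hopf by (simp add: hopf_def bialg_def kalg_def)
lemma m_scaleR[simp]: "m x (s c y) = s c (m x y)" using hopf by (simp add: hopf_def bialg_def kalg_def)
lemma D_add: "teq2 s s (D (x + y)) (D x @ D y)" using hopf by (simp add: hopf_def bialg_def)
lemma D_scale: "teq2 s s (D (s c x)) (map (\<lambda>(a,b). (s c a, b)) (D x))" using hopf by (simp add: hopf_def bialg_def)
lemma coass: "teq3 s s s [(a1, a2, b). (a,b) \<leftarrow> D x, (a1,a2) \<leftarrow> D a]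
                        [(a, b1, b2). (a,b) \<leftarrow> D x, (b1,b2) \<leftarrow> D b]" using hopf by (simp add: hopf_def bialg_def)
lemma e_lin: "klinear s (*) e" using hopf by (simp add: hopf_def bialg_def)
lemma counitL: "sum_list (map (\<lambda>(a,b). s (e a) b) (D x)) = x" using hopf by (simp add: hopf_def bialg_def)
lemma counitR: "sum_list (map (\<lambda>(a,b). s (e b) a) (D x)) = x" using hopf by (simp add: hopf_def bialg_def)
lemma D_mult: "teq2 s s (D (m x y)) [(m a c, m b d). (a,b) \<leftarrow> D x, (c,d) \<leftarrow> D y]" using hopf by (simp add: hopf_def bialg_def)
lemma D_unit: "teq2 s s (D u) [(u, u)]" using hopf by (simp add: hopf_def bialg_def)
lemma e_mult: "e (m x y) = e x * e y" using hopf by (simp add: hopf_def bialg_def)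
lemma e_unit[simp]: "e u = 1" using hopf by (simp add: hopf_def bialg_def)
lemma S_lin: "klinear s s S" using hopf by (simp add: hopf_def)
lemma antiL: "sum_list (map (\<lambda>(a,b). m (S a) b) (D x)) = s (e x) u" using hopf by (simp add: hopf_def)
lemma antiR: "sum_list (map (\<lambda>(a,b). m a (S b)) (D x)) = s (e x) u" using hopf by (simp add: hopf_def)

lemma s_add[simp]: "s c (x + y) = s c x + s c y" using vs by (simp add: vector_space_def)
lemma s_s[simp]: "s c (s d x) = s (c * d) x" using vs by (simp add: vector_space_def)
lemma s_1[simp]: "s 1 x = x" using vs by (simp add: vector_space_def)
lemma s_addL: "s (c + d) x = s c x + s d x" using vs by (simp add: vector_space_def)
lemma s_0[simp]: "s 0 x = 0" by (metis add_cancel_right_right add_0 s_addL)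
lemma s_0r[simp]: "s c 0 = 0" by (metis add_cancel_right_right add_0 s_add)
lemma S_add[simp]: "S (x + y) = S x + S y" using S_lin by (simp add: klin_add)
lemma S_scale[simp]: "S (s c x) = s c (S x)" using S_lin by (simp add: klin_scale)
lemma S_0[simp]: "S 0 = 0" using S_lin by (simp add: klin_zero)
lemma e_add[simp]: "e (x + y) = e x + e y" using e_lin by (simp add: klin_add)
lemma e_scale[simp]: "e (s c x) = c * e x" using e_lin by (simp add: klin_scale)
lemma e_0[simp]: "e 0 = 0" using e_lin by (simp add: klin_zero)
lemma m_0L[simp]: "m 0 x = 0" by (metis add_cancel_right_right m_addL)
lemma m_0R[simp]: "m x 0 = 0" by (metis add_cancel_right_right m_addR)
lemma s_sum: "sum_list (map (\<lambda>x. s c (f x)) xs) = s c (sum_list (map f xs))"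
  using vs by (rule vs_sum_scale)
lemma s_sum_in[simp]: "s c (sum_list (map f xs)) = sum_list (map (\<lambda>x. s c (f x)) xs)"
  using vs by (rule vs_sum_scale[symmetric])

lemma m_lin1: "klinear s s (\<lambda>x. m x y)" by (simp add: klinear_def)
lemma m_lin2: "klinear s s (\<lambda>y. m x y)" by (simp add: klinear_def)
lemma S_sum: "S (sum_list (map f xs)) = sum_list (map (\<lambda>i. S (f i)) xs)" by (rule klin_sum[OF S_lin])


lemmas lin2 = klinear_def sum_list_addf ac_simps

lemma D_tr_add:
  assumes vT: "vector_space sT" and l1: "\<And>w. klinear s sT (\<lambda>v. F v w)" and l2: "\<And>v. klinear s sT (\<lambda>w. F v w)"
  shows "sum_list (map (\<lambda>z. F (fst z) (snd z)) (D (x + y))) = sum_list (map (\<lambda>z. F (fst z) (snd z)) (D x)) + sum_list (map (\<lambda>z. F (fst z) (snd z)) (D y))"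
  using teq2_tr[OF D_add vT l1 l2] by simp

lemma D_tr_scale:
  assumes vT: "vector_space sT" and l1: "\<And>w. klinear s sT (\<lambda>v. F v w)" and l2: "\<And>v. klinear s sT (\<lambda>w. F v w)"
  shows "sum_list (map (\<lambda>z. F (fst z) (snd z)) (D (s c x))) = sT c (sum_list (map (\<lambda>z. F (fst z) (snd z)) (D x)))"
  using teq2_tr[OF D_scale vT l1 l2] klin_scale[OF l1] vs_sum_scale[OF vT]
  by (simp add: split_def o_def)

lemma D_tr_lin:
  assumes vT: "vector_space sT" and l1: "\<And>w. klinear s sT (\<lambda>v. F v w)" and l2: "\<And>v. klinear s sT (\<lambda>w. F v w)"
  shows "klinear s sT (\<lambda>x. sum_list (map (\<lambda>z. F (fst z) (snd z)) (D x)))"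
  unfolding klinear_def using D_tr_add[OF assms] D_tr_scale[OF assms] by blast

lemma coass_tr:
  assumes vT: "vector_space sT" and l1: "\<And>v w. klinear s sT (\<lambda>u. F u v w)" and l2: "\<And>u w. klinear s sT (\<lambda>v. F u v w)"
    and l3: "\<And>u v. klinear s sT (\<lambda>w. F u v w)"
  shows "sum_list (map (\<lambda>z. sum_list (map (\<lambda>p. F (fst p) (snd p) (snd z)) (D (fst z)))) (D h))
       = sum_list (map (\<lambda>z. sum_list (map (\<lambda>p. F (fst z) (fst p) (snd p)) (D (snd z)))) (D h))"
  using teq3_tr[OF coass[of h] vT l1 l2 l3] by (simp add: sum_list_concat_map split_def o_def)

lemma Dm_tr:
  assumes vT: "vector_space sT" and l1: "\<And>w. klinear s sT (\<lambda>v. F v w)" and l2: "\<And>v. klinear s sT (\<lambda>w. F v w)"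
  shows "sum_list (map (\<lambda>z. F (fst z) (snd z)) (D (m x y)))
       = sum_list (map (\<lambda>p. sum_list (map (\<lambda>q. F (m (fst p) (fst q)) (m (snd p) (snd q))) (D y))) (D x))"
  using teq2_tr[OF D_mult vT l1 l2] by (simp add: sum_list_concat_map split_def o_def)

lemma Du_tr:
  assumes vT: "vector_space sT" and l1: "\<And>w. klinear s sT (\<lambda>v. F v w)" and l2: "\<And>v. klinear s sT (\<lambda>w. F v w)"
  shows "sum_list (map (\<lambda>z. F (fst z) (snd z)) (D u)) = F u u"
  using teq2_tr[OF D_unit vT l1 l2] by simp

lemma counit_tr1:
  assumes vT: "vector_space sT" and L: "klinear s sT L"
  shows "sum_list (map (\<lambda>z. sT (e (fst z)) (L (snd z))) (D h)) = L h"
proof -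
  have "L h = L (sum_list (map (\<lambda>(a,b). s (e a) b) (D h)))" by (simp add: counitL)
  also have "\<dots> = sum_list (map (\<lambda>z. sT (e (fst z)) (L (snd z))) (D h))"
    by (simp add: klin_sum[OF L] klin_scale[OF L] split_def)
  finally show ?thesis by simp
qed

lemma counit_tr2:
  assumes vT: "vector_space sT" and L: "klinear s sT L"
  shows "sum_list (map (\<lambda>z. sT (e (snd z)) (L (fst z))) (D h)) = L h"
proof -
  have "L h = L (sum_list (map (\<lambda>(a,b). s (e b) a) (D h)))" by (simp add: counitR)
  also have "\<dots> = sum_list (map (\<lambda>z. sT (e (snd z)) (L (fst z))) (D h))"
    by (simp add: klin_sum[OF L] klin_scale[OF L] split_def)
  finally show ?thesis by simp
qed

lemma anti_tr1:
  assumes L: "klinear s sT L"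
  shows "sum_list (map (\<lambda>z. L (m (S (fst z)) (snd z))) (D h)) = sT (e h) (L u)"
proof -
  have "sT (e h) (L u) = L (sum_list (map (\<lambda>(a,b). m (S a) b) (D h)))" by (simp add: antiL klin_scale[OF L])
  also have "\<dots> = sum_list (map (\<lambda>z. L (m (S (fst z)) (snd z))) (D h))"
    by (simp add: klin_sum[OF L] split_def)
  finally show ?thesis by simp
qed

lemma anti_tr2:
  assumes L: "klinear s sT L"
  shows "sum_list (map (\<lambda>z. L (m (fst z) (S (snd z)))) (D h)) = sT (e h) (L u)"
proof -
  have "sT (e h) (L u) = L (sum_list (map (\<lambda>(a,b). m a (S b)) (D h)))" by (simp add: antiR klin_scale[OF L])
  also have "\<dots> = sum_list (map (\<lambda>z. L (m (fst z) (S (snd z)))) (D h))"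
    by (simp add: klin_sum[OF L] split_def)
  finally show ?thesis by simp
qed


lemma D_add': assumes vT: "vector_space sT" and l1: "\<And>w. klinear s sT (\<lambda>v. G (v, w))" and l2: "\<And>v. klinear s sT (\<lambda>w. G (v, w))"
  shows "sum_list (map G (D (x + y))) = sum_list (map G (D x)) + sum_list (map G (D y))"
  using D_tr_add[OF vT, of "\<lambda>v w. G (v, w)", OF l1 l2] by simp

lemma D_scale': assumes vT: "vector_space sT" and l1: "\<And>w. klinear s sT (\<lambda>v. G (v, w))" and l2: "\<And>v. klinear s sT (\<lambda>w. G (v, w))"
  shows "sum_list (map G (D (s c x))) = sT c (sum_list (map G (D x)))"
  using D_tr_scale[OF vT, of "\<lambda>v w. G (v, w)", OF l1 l2] by simp

lemmas Dk_add = D_add'[OF vs_field] and Dk_scale = D_scale'[OF vs_field]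
lemmas Ds_add = D_add'[OF vs] and Ds_scale = D_scale'[OF vs]

lemma S_u[simp]: "S u = u"
proof -
  have "sum_list (map (\<lambda>z. m (S (fst z)) (snd z)) (D u)) = m (S u) u"
    by (rule Du_tr[OF vs]) (simp_all add: lin2)
  with antiL[of u] show ?thesis by (simp add: split_def)
qed

lemma e_S[simp]: "e (S x) = e x"
proof -
  have "e (S x) = e (S (sum_list (map (\<lambda>(a,b). s (e b) a) (D x))))" by (simp add: counitR)
  also have "\<dots> = sum_list (map (\<lambda>z. e (snd z) * e (S (fst z))) (D x))"
    by (simp add: S_sum klin_sum[OF e_lin] split_def)
  also have "\<dots> = e (sum_list (map (\<lambda>(a,b). m (S a) b) (D x)))"
    by (simp add: klin_sum[OF e_lin] split_def e_mult mult.commute)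
  also have "\<dots> = e x" by (simp add: antiL)
  finally show ?thesis .
qed


lemma klin_comp: "klinear s1 s2 g \<Longrightarrow> klinear s2 s3 f \<Longrightarrow> klinear s1 s3 (\<lambda>x. f (g x))"
  by (simp add: klinear_def)

lemma DS_lin:
  assumes vT: "vector_space sT" and l1: "\<And>w. klinear s sT (\<lambda>v. F v w)" and l2: "\<And>v. klinear s sT (\<lambda>w. F v w)"
  shows "klinear s sT (\<lambda>x. sum_list (map (\<lambda>z. F (fst z) (snd z)) (D (S x))))"
  by (rule klin_comp[OF S_lin D_tr_lin[OF assms]])

lemma test: "klinear s s (\<lambda>v. sum_list (map (\<lambda>r. m (S (fst r)) (m v (s (e (snd r)) (S (snd r))))) (D y)))"
  by (simp add: klinear_def sum_list_addf ac_simps)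

end

context HA begin

lemma anti_ctx1: "sum_list (map (\<lambda>z. m x (m (S (fst z)) (m (snd z) y))) (D h)) = s (e h) (m x y)"
  using anti_tr1[of s "\<lambda>w. m x (m w y)" h] by (simp add: lin2 m_assoc)
lemma anti_ctx0: "sum_list (map (\<lambda>z. m (S (fst z)) (m (snd z) y)) (D h)) = s (e h) y"
  using anti_tr1[of s "\<lambda>w. m w y" h] by (simp add: lin2 m_assoc)
lemma anti_ctx2: "sum_list (map (\<lambda>z. m x (m (fst z) (m (S (snd z)) y))) (D h)) = s (e h) (m x y)"
  using anti_tr2[of s "\<lambda>w. m x (m w y)" h] by (simp add: lin2 m_assoc)
lemma anti_ctx3: "sum_list (map (\<lambda>z. m (fst z) (m (S (snd z)) y)) (D h)) = s (e h) y"
  using anti_tr2[of s "\<lambda>w. m w y" h] by (simp add: lin2 m_assoc)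

lemma S_anti: "S (m x y) = m (S y) (S x)"
proof -
  have 1: "m (S y) (S x) = sum_list (map (\<lambda>a. s (e (snd a)) (m (S y) (S (fst a)))) (D x))"
    by (rule counit_tr2[OF vs, of "\<lambda>w. m (S y) (S w)", symmetric]) (simp add: lin2)
  have 2: "m (S y) (S a) = sum_list (map (\<lambda>b. s (e (snd b)) (m (S (fst b)) (S a))) (D y))" for a
    by (rule counit_tr2[OF vs, of "\<lambda>w. m (S w) (S a)", symmetric]) (simp add: lin2)
  have A: "m (S y) (S x) = sum_list (map (\<lambda>a. sum_list (map (\<lambda>b.
      s (e (m (snd a) (snd b))) (m (S (fst b)) (S (fst a)))) (D y))) (D x))"
    unfolding 1 by (simp add: 2 e_mult)
  have 3: "s (e (m (snd a) (snd b))) (m (S (fst b)) (S (fst a)))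
     = sum_list (map (\<lambda>c. m (S (fst b)) (m (S (fst a)) (m (fst c) (S (snd c))))) (D (m (snd a) (snd b))))" for a b
    using anti_tr2[of s "\<lambda>w. m (S (fst b)) (m (S (fst a)) w)"] by (simp add: lin2)
  have 4: "sum_list (map (\<lambda>c. m (S (fst b)) (m (S (fst a)) (m (fst c) (S (snd c))))) (D (m (snd a) (snd b))))
     = sum_list (map (\<lambda>p. sum_list (map (\<lambda>q. m (S (fst b)) (m (S (fst a)) (m (m (fst p) (fst q)) (S (m (snd p) (snd q))))))
          (D (snd b)))) (D (snd a)))" for a b
    by (rule Dm_tr[OF vs, of "\<lambda>v w. m (S (fst b)) (m (S (fst a)) (m v (S w)))"]) (simp_all add: lin2)
  have B: "m (S y) (S x) = sum_list (map (\<lambda>a. sum_list (map (\<lambda>p. sum_list (map (\<lambda>b. sum_list (map (\<lambda>q.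
        m (S (fst b)) (m (S (fst a)) (m (m (fst p) (fst q)) (S (m (snd p) (snd q))))))
          (D (snd b)))) (D y))) (D (snd a)))) (D x))"
    unfolding A 3 4 by (simp only: swap2[of _ "D y"])
  have C: "m (S y) (S x) = sum_list (map (\<lambda>a. sum_list (map (\<lambda>p. sum_list (map (\<lambda>b. sum_list (map (\<lambda>q.
        m (S (fst b)) (m (S (fst p)) (m (m (snd p) (fst q)) (S (m (snd a) (snd q))))))
          (D (snd b)))) (D y))) (D (fst a)))) (D x))"
    unfolding B
    by (rule coass_tr[OF vs, of "\<lambda>a1 p1 p2. sum_list (map (\<lambda>b. sum_list (map (\<lambda>q.
        m (S (fst b)) (m (S a1) (m (m p1 (fst q)) (S (m p2 (snd q))))))
          (D (snd b)))) (D y))", symmetric]) (simp_all add: lin2)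
  have 5: "sum_list (map (\<lambda>p. sum_list (map (\<lambda>b. sum_list (map (\<lambda>q.
        m (S (fst b)) (m (S (fst p)) (m (m (snd p) (fst q)) (S (m (snd a) (snd q))))))
          (D (snd b)))) (D y))) (D (fst a)))
      = sum_list (map (\<lambda>b. sum_list (map (\<lambda>q. s (e (fst a)) (m (S (fst b)) (m (fst q) (S (m (snd a) (snd q))))))
          (D (snd b)))) (D y))" for a
    by (simp only: swap3 m_assoc anti_ctx1)
  have E: "m (S y) (S x) = sum_list (map (\<lambda>b. sum_list (map (\<lambda>q. m (S (fst b)) (m (fst q) (S (m x (snd q)))))
          (D (snd b)))) (D y))"
    unfolding C 5
    by (rule trans[OF _ counit_tr1[OF vs, of "\<lambda>w. sum_list (map (\<lambda>b. sum_list (map (\<lambda>q. m (S (fst b)) (m (fst q) (S (m w (snd q)))))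
          (D (snd b)))) (D y))" x]]) (simp_all add: lin2)
  have F: "m (S y) (S x) = sum_list (map (\<lambda>b. sum_list (map (\<lambda>q. m (S (fst q)) (m (snd q) (S (m x (snd b)))))
          (D (fst b)))) (D y))"
    unfolding E
    by (rule coass_tr[OF vs, of "\<lambda>b1 q1 q2. m (S b1) (m q1 (S (m x q2)))", symmetric]) (simp_all add: lin2)
  show ?thesis unfolding F anti_ctx0
    by (rule counit_tr1[OF vs, of "\<lambda>w. S (m x w)", symmetric]) (simp add: lin2)
qed

end

context HA begin

lemmas kpush = sum_list_const_mult[symmetric]

lemma S_coanti_f:
  assumes f: "bilin s s f"
  shows "sum_list (map (\<lambda>z. f (S (snd z)) (S (fst z))) (D h)) = sum_list (map (\<lambda>t. f (fst t) (snd t)) (D (S h)))"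
proof -
  have fL_add[simp]: "f (x + y) w = f x w + f y w" for x y w using klin_add[OF bilinD1[OF f]] .
  have fR_add[simp]: "f w (x + y) = f w x + f w y" for x y w using klin_add[OF bilinD2[OF f]] .
  have fL_sc[simp]: "f (s c x) w = c * f x w" for c x w using klin_scale[OF bilinD1[OF f]] .
  have fR_sc[simp]: "f w (s c x) = c * f w x" for c x w using klin_scale[OF bilinD2[OF f]] .
  note ls = lin2 kpush
  have 1: "f (S c) (S a) = sum_list (map (\<lambda>w. e (snd w) * f (S (fst w)) (S a)) (D c))" for a c
    by (rule counit_tr2[OF vs_field, of "\<lambda>v. f (S v) (S a)" c, symmetric]) (simp add: ls)
  have 2: "e c2 * f (S w1) (S a) = sum_list (map (\<lambda>q. sum_list (map (\<lambda>t. f (m (S w1) (fst t)) (m (S a) (snd t)))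
             (D (m (fst q) (S (snd q)))))) (D c2))" for c2 w1 a
  proof -
    have "sum_list (map (\<lambda>t. f (m (S w1) (fst t)) (m (S a) (snd t))) (D u)) = f (S w1) (S a)"
      by (rule Du_tr[OF vs_field, of "\<lambda>v w. f (m (S w1) v) (m (S a) w)", simplified]) (simp_all add: ls)
    moreover have "sum_list (map (\<lambda>q. sum_list (map (\<lambda>t. f (m (S w1) (fst t)) (m (S a) (snd t)))
             (D (m (fst q) (S (snd q)))))) (D c2)) = e c2 * sum_list (map (\<lambda>t. f (m (S w1) (fst t)) (m (S a) (snd t))) (D u))"
      by (rule anti_tr2[of "(*)" "\<lambda>v. sum_list (map (\<lambda>t. f (m (S w1) (fst t)) (m (S a) (snd t))) (D v))"])
         (rule D_tr_lin[OF vs_field, of "\<lambda>v w. f (m (S w1) v) (m (S a) w)"]; simp add: lin2 kpush)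
    ultimately show ?thesis by simp
  qed
  have 3: "sum_list (map (\<lambda>t. f (m (S w1) (fst t)) (m (S a) (snd t))) (D (m q1 (S q2))))
     = sum_list (map (\<lambda>r. sum_list (map (\<lambda>t. f (m (S w1) (m (fst r) (fst t))) (m (S a) (m (snd r) (snd t)))) (D (S q2)))) (D q1))"
    for w1 a q1 q2
    by (rule Dm_tr[OF vs_field, of "\<lambda>v w. f (m (S w1) v) (m (S a) w)"]) (simp_all add: ls)
  have R3: "sum_list (map (\<lambda>z. f (S (snd z)) (S (fst z))) (D h)) =
    sum_list (map (\<lambda>z. sum_list (map (\<lambda>w. sum_list (map (\<lambda>q. sum_list (map (\<lambda>r. sum_list (map (\<lambda>t.
       f (m (S (fst w)) (m (fst r) (fst t))) (m (S (fst z)) (m (snd r) (snd t))))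
      (D (S (snd q))))) (D (fst q)))) (D (snd w)))) (D (snd z)))) (D h))"
  proof -
    have "sum_list (map (\<lambda>z. f (S (snd z)) (S (fst z))) (D h)) =
      sum_list (map (\<lambda>z. sum_list (map (\<lambda>w. e (snd w) * f (S (fst w)) (S (fst z))) (D (snd z)))) (D h))"
      by (rule sum_cong) (rule 1)
    then show ?thesis by (simp only: 2 3)
  qed
  have antif: "sum_list (map (\<lambda>q. f (m (S (fst q)) (m (snd q) x)) y) (D c)) = e c * f x y" for c x y
    using anti_tr1[of "(*)" "\<lambda>v. f (m v x) y" c] by (simp add: ls m_assoc)
  have antif2: "sum_list (map (\<lambda>q. f x (m (S (fst q)) (m (snd q) y))) (D c)) = e c * f x y" for c x y
    using anti_tr1[of "(*)" "\<lambda>v. f x (m v y)" c] by (simp add: ls m_assoc)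
  have R4: "sum_list (map (\<lambda>z. f (S (snd z)) (S (fst z))) (D h)) =
    sum_list (map (\<lambda>z. sum_list (map (\<lambda>w. sum_list (map (\<lambda>q. sum_list (map (\<lambda>r. sum_list (map (\<lambda>t.
       f (m (S (fst w)) (m (fst q) (fst t))) (m (S (fst z)) (m (fst r) (snd t))))
      (D (S (snd r))))) (D (snd q)))) (D (snd w)))) (D (snd z)))) (D h))"
    unfolding R3
  proof (rule sum_cong, rule sum_cong)
    fix z w
    show "sum_list (map (\<lambda>q. sum_list (map (\<lambda>r. sum_list (map (\<lambda>t.
       f (m (S (fst w)) (m (fst r) (fst t))) (m (S (fst z)) (m (snd r) (snd t))))
      (D (S (snd q))))) (D (fst q)))) (D (snd w))) =
      sum_list (map (\<lambda>q. sum_list (map (\<lambda>r. sum_list (map (\<lambda>t.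
       f (m (S (fst w)) (m (fst q) (fst t))) (m (S (fst z)) (m (fst r) (snd t))))
      (D (S (snd r))))) (D (snd q)))) (D (snd w)))"
      by (rule coass_tr[OF vs_field, of "\<lambda>a b c. sum_list (map (\<lambda>t. f (m (S (fst w)) (m a (fst t))) (m (S (fst z)) (m b (snd t)))) (D (S c)))" "snd w"])
        (simp add: ls, simp add: ls, rule DS_lin[OF vs_field], simp_all add: ls)
  qed
  have R5: "sum_list (map (\<lambda>z. f (S (snd z)) (S (fst z))) (D h)) =
    sum_list (map (\<lambda>z. sum_list (map (\<lambda>w. sum_list (map (\<lambda>q. sum_list (map (\<lambda>r. sum_list (map (\<lambda>t.
       f (m (S (fst q)) (m (snd q) (fst t))) (m (S (fst z)) (m (fst r) (snd t))))
      (D (S (snd r))))) (D (snd w)))) (D (fst w)))) (D (snd z)))) (D h))"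
    unfolding R4
  proof (rule sum_cong)
    fix z
    show "sum_list (map (\<lambda>w. sum_list (map (\<lambda>q. sum_list (map (\<lambda>r. sum_list (map (\<lambda>t.
       f (m (S (fst w)) (m (fst q) (fst t))) (m (S (fst z)) (m (fst r) (snd t))))
      (D (S (snd r))))) (D (snd q)))) (D (snd w)))) (D (snd z))) =
      sum_list (map (\<lambda>w. sum_list (map (\<lambda>q. sum_list (map (\<lambda>r. sum_list (map (\<lambda>t.
       f (m (S (fst q)) (m (snd q) (fst t))) (m (S (fst z)) (m (fst r) (snd t))))
      (D (S (snd r))))) (D (snd w)))) (D (fst w)))) (D (snd z)))"
      by (rule coass_tr[OF vs_field, of "\<lambda>a b c. sum_list (map (\<lambda>r. sum_list (map (\<lambda>t.
          f (m (S a) (m b (fst t))) (m (S (fst z)) (m (fst r) (snd t)))) (D (S (snd r))))) (D c))" "snd z", symmetric])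
        (simp add: ls, simp add: ls, rule D_tr_lin[OF vs_field], simp add: ls, rule DS_lin[OF vs_field], simp_all add: ls)
  qed
  have R6: "sum_list (map (\<lambda>z. f (S (snd z)) (S (fst z))) (D h)) =
    sum_list (map (\<lambda>z. sum_list (map (\<lambda>w. sum_list (map (\<lambda>r. sum_list (map (\<lambda>t.
       e (fst w) * f (fst t) (m (S (fst z)) (m (fst r) (snd t))))
      (D (S (snd r))))) (D (snd w)))) (D (snd z)))) (D h))"
    unfolding R5 by (simp only: swap3 antif)
  have R7: "sum_list (map (\<lambda>z. f (S (snd z)) (S (fst z))) (D h)) =
    sum_list (map (\<lambda>z. sum_list (map (\<lambda>r. sum_list (map (\<lambda>t.
       f (fst t) (m (S (fst z)) (m (fst r) (snd t))))
      (D (S (snd r))))) (D (snd z)))) (D h))"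
    unfolding R6
  proof (rule sum_cong)
    fix z
    show "sum_list (map (\<lambda>w. sum_list (map (\<lambda>r. sum_list (map (\<lambda>t.
       e (fst w) * f (fst t) (m (S (fst z)) (m (fst r) (snd t))))
      (D (S (snd r))))) (D (snd w)))) (D (snd z))) =
      sum_list (map (\<lambda>r. sum_list (map (\<lambda>t.
       f (fst t) (m (S (fst z)) (m (fst r) (snd t))))
      (D (S (snd r))))) (D (snd z)))"
      by (rule trans[OF _ counit_tr1[OF vs_field, of "\<lambda>v. sum_list (map (\<lambda>r. sum_list (map (\<lambda>t.
       f (fst t) (m (S (fst z)) (m (fst r) (snd t)))) (D (S (snd r))))) (D v))" "snd z"]])
        (simp add: kpush, rule D_tr_lin[OF vs_field], simp add: ls, rule DS_lin[OF vs_field], simp_all add: ls)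
  qed
  have R8: "sum_list (map (\<lambda>z. f (S (snd z)) (S (fst z))) (D h)) =
    sum_list (map (\<lambda>z. sum_list (map (\<lambda>r. sum_list (map (\<lambda>t.
       f (fst t) (m (S (fst r)) (m (snd r) (snd t))))
      (D (S (snd z))))) (D (fst z)))) (D h))"
    unfolding R7
    by (rule coass_tr[OF vs_field, of "\<lambda>a b c. sum_list (map (\<lambda>t. f (fst t) (m (S a) (m b (snd t)))) (D (S c)))" h, symmetric])
        (simp add: ls, simp add: ls, rule DS_lin[OF vs_field], simp_all add: ls)
  have R9: "sum_list (map (\<lambda>z. f (S (snd z)) (S (fst z))) (D h)) =
    sum_list (map (\<lambda>z. sum_list (map (\<lambda>t. e (fst z) * f (fst t) (snd t)) (D (S (snd z))))) (D h))"
    unfolding R8 by (simp only: swap2 antif2)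
  show ?thesis unfolding R9
    by (rule trans[OF _ counit_tr1[OF vs_field, of "\<lambda>v. sum_list (map (\<lambda>t. f (fst t) (snd t)) (D (S v)))"]])
       (simp add: kpush, rule DS_lin[OF vs_field], simp_all add: ls)
qed

lemma S_coanti: "teq2 s s (D (S h)) (map (\<lambda>(a,b). (S b, S a)) (D h))"
  by (rule teq2_I) (simp add: S_coanti_f[symmetric] split_def o_def)

end

locale HAb = HA + assumes bijS: "bij S"
begin

definition Si where "Si = inv S"

lemma Si_S[simp]: "Si (S x) = x" unfolding Si_def using bijS by (simp add: bij_def)
lemma S_Si[simp]: "S (Si x) = x" unfolding Si_def using bijS by (simp add: bij_def surj_f_inv_f)
lemma S_inj: "S x = S y \<Longrightarrow> x = y" by (metis Si_S)

lemma Si_add[simp]: "Si (x + y) = Si x + Si y" by (rule S_inj) simp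
lemma Si_scale[simp]: "Si (s c x) = s c (Si x)" by (rule S_inj) simp
lemma Si_lin: "klinear s s Si" by (simp add: klinear_def)
lemma Si_anti: "Si (m x y) = m (Si y) (Si x)" by (rule S_inj) (simp add: S_anti)
lemma Si_u[simp]: "Si u = u" by (rule S_inj) simp
lemma e_Si[simp]: "e (Si x) = e x" by (metis S_Si e_S)
lemma Si_sum: "Si (sum_list (map f xs)) = sum_list (map (\<lambda>i. Si (f i)) xs)" by (rule klin_sum[OF Si_lin])

lemma Si_coanti_f:
  assumes f: "bilin s s f"
  shows "sum_list (map (\<lambda>t. f (fst t) (snd t)) (D (Si h))) = sum_list (map (\<lambda>z. f (Si (snd z)) (Si (fst z))) (D h))"
proof -
  have g: "bilin s s (\<lambda>v w. f (Si w) (Si v))"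
    using f unfolding bilin_def klinear_def by simp
  from S_coanti_f[OF g, of "Si h"] show ?thesis by simp
qed

lemma Si_coanti: "teq2 s s (D (Si h)) (map (\<lambda>(a,b). (Si b, Si a)) (D h))"
  by (rule teq2_I) (simp add: Si_coanti_f split_def o_def)

lemma antiSi1: "sum_list (map (\<lambda>z. m (snd z) (Si (fst z))) (D h)) = s (e h) u"
proof (rule S_inj)
  show "S (sum_list (map (\<lambda>z. m (snd z) (Si (fst z))) (D h))) = S (s (e h) u)"
    using antiR[of h] by (simp add: S_sum S_anti split_def)
qed

lemma antiSi2: "sum_list (map (\<lambda>z. m (Si (snd z)) (fst z)) (D h)) = s (e h) u"
proof (rule S_inj)
  show "S (sum_list (map (\<lambda>z. m (Si (snd z)) (fst z)) (D h))) = S (s (e h) u)"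
    using antiL[of h] by (simp add: S_sum S_anti split_def)
qed

end

locale TD = HAb sH mH uH D e S
  for sH :: "'k::field \<Rightarrow> 'h::ab_group_add \<Rightarrow> 'h" and mH uH D e S +
  fixes sA :: "'k \<Rightarrow> 'a::ab_group_add \<Rightarrow> 'a" and mA :: "'a \<Rightarrow> 'a \<Rightarrow> 'a" and uA :: 'a
    and act :: "'a \<Rightarrow> 'h \<Rightarrow> 'a" and psi :: "'a \<Rightarrow> ('a \<times> 'h) list"
  assumes rtd: "right_twisting_datum sA mA uA sH mH uH D e act psi"
begin

lemma kalgA: "kalg sA mA uA" using rtd by (simp add: right_twisting_datum_def)
lemma vsA: "vector_space sA" using kalgA by (simp add: kalg_def)
lemma mA_assoc: "mA (mA x y) z = mA x (mA y z)" using kalgA by (simp add: kalg_def)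
lemma mA_u1[simp]: "mA uA x = x" using kalgA by (simp add: kalg_def)
lemma mA_u2[simp]: "mA x uA = x" using kalgA by (simp add: kalg_def)
lemma mA_addR[simp]: "mA x (y + z) = mA x y + mA x z" using kalgA by (simp add: kalg_def)
lemma mA_addL[simp]: "mA (x + y) z = mA x z + mA y z" using kalgA by (simp add: kalg_def)
lemma mA_scaleL[simp]: "mA (sA c x) y = sA c (mA x y)" using kalgA by (simp add: kalg_def)
lemma mA_scaleR[simp]: "mA x (sA c y) = sA c (mA x y)" using kalgA by (simp add: kalg_def)
lemma sA_add[simp]: "sA c (x + y) = sA c x + sA c y" using vsA by (simp add: vector_space_def)
lemma sA_s[simp]: "sA c (sA d x) = sA (c * d) x" using vsA by (simp add: vector_space_def)
lemma sA_1[simp]: "sA 1 x = x" using vsA by (simp add: vector_space_def)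
lemma sA_addL: "sA (c + d) x = sA c x + sA d x" using vsA by (simp add: vector_space_def)
lemma sA_0[simp]: "sA 0 x = 0" by (metis add_cancel_right_right add_0 sA_addL)
lemma sA_0r[simp]: "sA c 0 = 0" by (metis add_cancel_right_right add_0 sA_add)
lemma sA_sum: "sum_list (map (\<lambda>x. sA c (f x)) xs) = sA c (sum_list (map f xs))"
  using vsA by (rule vs_sum_scale)
lemma sA_sum_in[simp]: "sA c (sum_list (map f xs)) = sum_list (map (\<lambda>x. sA c (f x)) xs)"
  using vsA by (rule vs_sum_scale[symmetric])
lemma mA_0L[simp]: "mA 0 x = 0" by (metis add_cancel_right_right mA_addL)
lemma mA_0R[simp]: "mA x 0 = 0" by (metis add_cancel_right_right mA_addR)

lemma act_linA: "klinear sA sA (\<lambda>a. act a h)" using rtd by (simp add: right_twisting_datum_def)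
lemma act_linH: "klinear sH sA (\<lambda>h. act a h)" using rtd by (simp add: right_twisting_datum_def)
lemma act_addL[simp]: "act (x + y) h = act x h + act y h" using klin_add[OF act_linA] .
lemma act_scaleL[simp]: "act (sA c x) h = sA c (act x h)" using klin_scale[OF act_linA] .
lemma act_addR[simp]: "act a (g + h) = act a g + act a h" using klin_add[OF act_linH] .
lemma act_scaleR[simp]: "act a (sH c h) = sA c (act a h)" using klin_scale[OF act_linH] .
lemma act_0L[simp]: "act 0 h = 0" using klin_zero[OF act_linA] .
lemma act_0R[simp]: "act a 0 = 0" using klin_zero[OF act_linH] .
lemma act_u[simp]: "act a uH = a" using rtd by (simp add: right_twisting_datum_def)
lemma act_m: "act a (mH h g) = act (act a h) g" using rtd by (simp add: right_twisting_datum_def)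
lemma act_mA: "act (mA a b) h = sum_list (map (\<lambda>(h1,h2). mA (act a h1) (act b h2)) (D h))"
  using rtd by (simp add: right_twisting_datum_def)
lemma act_uA: "act uA h = sA (e h) uA" using rtd by (simp add: right_twisting_datum_def)
lemma psi_add: "teq2 sA sH (psi (a + b)) (psi a @ psi b)" using rtd by (simp add: right_twisting_datum_def)
lemma psi_scale: "teq2 sA sH (psi (sA c a)) (map (\<lambda>(x,y). (sA c x, y)) (psi a))" using rtd by (simp add: right_twisting_datum_def)
lemma psi_coass: "teq3 sA sH sH [(x0, x1, y). (x,y) \<leftarrow> psi a, (x0,x1) \<leftarrow> psi x]
                           [(x, y1, y2). (x,y) \<leftarrow> psi a, (y1,y2) \<leftarrow> D y]" using rtd by (simp add: right_twisting_datum_def)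
lemma psi_counit: "sum_list (map (\<lambda>(x,y). sA (e y) x) (psi a)) = a" using rtd by (simp add: right_twisting_datum_def)
lemma psi_mult: "teq2 sA sH (psi (mA a b)) [(mA x z, mH y w). (x,y) \<leftarrow> psi a, (z,w) \<leftarrow> psi b]" using rtd by (simp add: right_twisting_datum_def)
lemma psi_unit: "teq2 sA sH (psi uA) [(uA, uH)]" using rtd by (simp add: right_twisting_datum_def)
lemma psi_act: "teq2 sA sH (psi (act a h)) (map (\<lambda>(x,y). (act x h, y)) (psi a))" using rtd by (simp add: right_twisting_datum_def)

lemma psi_tr_add:
  assumes vT: "vector_space sT" and l1: "\<And>w. klinear sA sT (\<lambda>v. F v w)" and l2: "\<And>v. klinear sH sT (\<lambda>w. F v w)"
  shows "sum_list (map (\<lambda>z. F (fst z) (snd z)) (psi (x + y))) = sum_list (map (\<lambda>z. F (fst z) (snd z)) (psi x)) + sum_list (map (\<lambda>z. F (fst z) (snd z)) (psi y))"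
  using teq2_tr[OF psi_add vT l1 l2] by simp

lemma psi_tr_scale:
  assumes vT: "vector_space sT" and l1: "\<And>w. klinear sA sT (\<lambda>v. F v w)" and l2: "\<And>v. klinear sH sT (\<lambda>w. F v w)"
  shows "sum_list (map (\<lambda>z. F (fst z) (snd z)) (psi (sA c x))) = sT c (sum_list (map (\<lambda>z. F (fst z) (snd z)) (psi x)))"
  using teq2_tr[OF psi_scale vT l1 l2] klin_scale[OF l1] vs_sum_scale[OF vT]
  by (simp add: split_def o_def)

lemma psi_tr_lin:
  assumes vT: "vector_space sT" and l1: "\<And>w. klinear sA sT (\<lambda>v. F v w)" and l2: "\<And>v. klinear sH sT (\<lambda>w. F v w)"
  shows "klinear sA sT (\<lambda>x. sum_list (map (\<lambda>z. F (fst z) (snd z)) (psi x)))"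
  unfolding klinear_def using psi_tr_add[OF assms] psi_tr_scale[OF assms] by blast

lemma psi_coass_tr:
  assumes vT: "vector_space sT" and l1: "\<And>v w. klinear sA sT (\<lambda>u. F u v w)" and l2: "\<And>u w. klinear sH sT (\<lambda>v. F u v w)"
    and l3: "\<And>u v. klinear sH sT (\<lambda>w. F u v w)"
  shows "sum_list (map (\<lambda>z. sum_list (map (\<lambda>p. F (fst p) (snd p) (snd z)) (psi (fst z)))) (psi a))
       = sum_list (map (\<lambda>z. sum_list (map (\<lambda>p. F (fst z) (fst p) (snd p)) (D (snd z)))) (psi a))"
  using teq3_tr[OF psi_coass[of a] vT l1 l2 l3] by (simp add: sum_list_concat_map split_def o_def)

lemma psi_mult_tr:
  assumes vT: "vector_space sT" and l1: "\<And>w. klinear sA sT (\<lambda>v. F v w)" and l2: "\<And>v. klinear sH sT (\<lambda>w. F v w)"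
  shows "sum_list (map (\<lambda>z. F (fst z) (snd z)) (psi (mA x y)))
       = sum_list (map (\<lambda>p. sum_list (map (\<lambda>q. F (mA (fst p) (fst q)) (mH (snd p) (snd q))) (psi y))) (psi x))"
  using teq2_tr[OF psi_mult vT l1 l2] by (simp add: sum_list_concat_map split_def o_def)

lemma psi_unit_tr:
  assumes vT: "vector_space sT" and l1: "\<And>w. klinear sA sT (\<lambda>v. F v w)" and l2: "\<And>v. klinear sH sT (\<lambda>w. F v w)"
  shows "sum_list (map (\<lambda>z. F (fst z) (snd z)) (psi uA)) = F uA uH"
  using teq2_tr[OF psi_unit vT l1 l2] by simp

lemma psi_act_tr:
  assumes vT: "vector_space sT" and l1: "\<And>w. klinear sA sT (\<lambda>v. F v w)" and l2: "\<And>v. klinear sH sT (\<lambda>w. F v w)"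
  shows "sum_list (map (\<lambda>z. F (fst z) (snd z)) (psi (act a h))) = sum_list (map (\<lambda>z. F (act (fst z) h) (snd z)) (psi a))"
  using teq2_tr[OF psi_act vT l1 l2] by (simp add: split_def o_def)

lemma psi_counit_tr:
  assumes vT: "vector_space sT" and L: "klinear sA sT L"
  shows "sum_list (map (\<lambda>z. sT (e (snd z)) (L (fst z))) (psi a)) = L a"
proof -
  have "L a = L (sum_list (map (\<lambda>(x,y). sA (e y) x) (psi a)))" by (simp add: psi_counit)
  also have "\<dots> = sum_list (map (\<lambda>z. sT (e (snd z)) (L (fst z))) (psi a))"
    by (simp add: klin_sum[OF L] klin_scale[OF L] split_def)
  finally show ?thesis by simp
qed

lemma antiSi1_tr:
  assumes L: "klinear sH sT L"
  shows "sum_list (map (\<lambda>z. L (mH (snd z) (Si (fst z)))) (D h)) = sT (e h) (L uH)"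
proof -
  have "sT (e h) (L uH) = L (sum_list (map (\<lambda>z. mH (snd z) (Si (fst z))) (D h)))" by (simp add: antiSi1 klin_scale[OF L])
  also have "\<dots> = sum_list (map (\<lambda>z. L (mH (snd z) (Si (fst z)))) (D h))"
    by (simp add: klin_sum[OF L])
  finally show ?thesis by simp
qed

lemma antiSi2_tr:
  assumes L: "klinear sH sT L"
  shows "sum_list (map (\<lambda>z. L (mH (Si (snd z)) (fst z))) (D h)) = sT (e h) (L uH)"
proof -
  have "sT (e h) (L uH) = L (sum_list (map (\<lambda>z. mH (Si (snd z)) (fst z)) (D h)))" by (simp add: antiSi2 klin_scale[OF L])
  also have "\<dots> = sum_list (map (\<lambda>z. L (mH (Si (snd z)) (fst z))) (D h))"
    by (simp add: klin_sum[OF L])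
  finally show ?thesis by simp
qed

lemma act_sumR: "act a (sum_list (map f xs)) = sum_list (map (\<lambda>i. act a (f i)) xs)" by (rule klin_sum[OF act_linH])
lemma act_sumL: "act (sum_list (map f xs)) h = sum_list (map (\<lambda>i. act (f i) h) xs)" by (rule klin_sum[OF act_linA])

end

context TD begin

definition "pil = (\<lambda>h a. act a h)"
definition "psil = (\<lambda>a. map (\<lambda>(x,y). (Si y, x)) (psi a))"
definition "lam = (\<lambda>a. sum_list (map (\<lambda>(x,y). act x (Si y)) (psi a)))"
definition "laminv = (\<lambda>a. sum_list (map (\<lambda>(x,y). act x y) (psi a)))"

lemmas ls = lin2 kpush

lemma bialg_op: "bialg sH (\<lambda>x y. mH y x) uH D e"
proof -
  have bi: "bialg sH mH uH D e" using hopf by (simp add: hopf_def)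
  have ka: "kalg sH (\<lambda>x y. mH y x) uH" using bi by (simp add: bialg_def kalg_def m_assoc)
  have dm: "teq2 sH sH (D (mH y x)) [(mH c a, mH d b). (a,b) \<leftarrow> D x, (c,d) \<leftarrow> D y]" for x y
  proof (rule teq2_I)
    fix f assume f: "bilin sH sH f"
    show "sum_list (map (\<lambda>z. f (fst z) (snd z)) (D (mH y x))) =
      sum_list (map (\<lambda>z. f (fst z) (snd z)) [(mH c a, mH d b). (a,b) \<leftarrow> D x, (c,d) \<leftarrow> D y])"
      apply (subst Dm_tr[OF vs_field])
      using f apply (simp_all add: ls bilin_simps sum_list_concat_map split_def o_def)
      by (rule swap2)
  qed
  show ?thesis using bi ka dm by (simp add: bialg_def e_mult mult.commute)
qed


lemma psil_sum: "sum_list (map (\<lambda>z. f (fst z) (snd z)) (psil a)) = sum_list (map (\<lambda>z. f (Si (snd z)) (fst z)) (psi a))"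
  by (simp add: psil_def split_def o_def)

lemma psil_add: "teq2 sH sA (psil (a + b)) (psil a @ psil b)"
proof (rule teq2_I)
  fix f assume f: "bilin sH sA f"
  show "sum_list (map (\<lambda>z. f (fst z) (snd z)) (psil (a + b))) = sum_list (map (\<lambda>z. f (fst z) (snd z)) (psil a @ psil b))"
    unfolding psil_sum
    by (simp only: map_append sum_list_append psil_sum, rule psi_tr_add[OF vs_field, of "\<lambda>v w. f (Si w) v"])
      (use f in \<open>simp_all add: ls bilin_simps\<close>)
qed

lemma psil_scale: "teq2 sH sA (psil (sA c a)) (map (\<lambda>(y,x). (y, sA c x)) (psil a))"
proof (rule teq2_I)
  fix f assume f: "bilin sH sA f"
  have "sum_list (map (\<lambda>z. f (fst z) (snd z)) (psil (sA c a))) = c * sum_list (map (\<lambda>z. f (Si (snd z)) (fst z)) (psi a))"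
    unfolding psil_sum
    by (rule psi_tr_scale[OF vs_field, of "\<lambda>v w. f (Si w) v"]) (use f in \<open>simp_all add: ls bilin_simps\<close>)
  then show "sum_list (map (\<lambda>z. f (fst z) (snd z)) (psil (sA c a))) = sum_list (map (\<lambda>z. f (fst z) (snd z)) (map (\<lambda>(y,x). (y, sA c x)) (psil a)))"
    using f by (simp add: psil_def split_def o_def bilin_simps kpush)
qed

lemma psil_coass: "teq3 sH sH sA [(y, x1, x0). (y,x) \<leftarrow> psil a, (x1,x0) \<leftarrow> psil x]
                           [(y1, y2, x). (y,x) \<leftarrow> psil a, (y1,y2) \<leftarrow> D y]"
proof (rule teq3_I)
  fix f assume f: "trilin sH sH sA f"
  have "sum_list (map (\<lambda>z. f (fst z) (fst (snd z)) (snd (snd z))) [(y, x1, x0). (y,x) \<leftarrow> psil a, (x1,x0) \<leftarrow> psil x])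
     = sum_list (map (\<lambda>z. sum_list (map (\<lambda>p. f (Si (snd z)) (Si (snd p)) (fst p)) (psi (fst z)))) (psi a))"
    by (simp add: psil_def sum_list_concat_map split_def o_def)
  also have "\<dots> = sum_list (map (\<lambda>z. sum_list (map (\<lambda>p. f (Si (snd p)) (Si (fst p)) (fst z)) (D (snd z)))) (psi a))"
    by (rule psi_coass_tr[OF vs_field, of "\<lambda>x y1 y2. f (Si y2) (Si y1) x"]) (use f in \<open>simp_all add: ls trilin_simps\<close>)
  also have "\<dots> = sum_list (map (\<lambda>z. sum_list (map (\<lambda>t. f (fst t) (snd t) (fst z)) (D (Si (snd z))))) (psi a))"
  proof (rule sum_cong)
    fix z :: "'a \<times> 'h"
    have b: "bilin sH sH (\<lambda>v w. f v w (fst z))" using f by (simp add: bilin_def trilin_def)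
    show "sum_list (map (\<lambda>p. f (Si (snd p)) (Si (fst p)) (fst z)) (D (snd z))) = sum_list (map (\<lambda>t. f (fst t) (snd t) (fst z)) (D (Si (snd z))))"
      using Si_coanti_f[OF b, of "snd z"] by simp
  qed
  also have "\<dots> = sum_list (map (\<lambda>z. f (fst z) (fst (snd z)) (snd (snd z))) [(y1, y2, x). (y,x) \<leftarrow> psil a, (y1,y2) \<leftarrow> D y])"
    by (simp add: psil_def sum_list_concat_map split_def o_def)
  finally show "sum_list (map (\<lambda>z. f (fst z) (fst (snd z)) (snd (snd z))) [(y, x1, x0). (y,x) \<leftarrow> psil a, (x1,x0) \<leftarrow> psil x])
     = sum_list (map (\<lambda>z. f (fst z) (fst (snd z)) (snd (snd z))) [(y1, y2, x). (y,x) \<leftarrow> psil a, (y1,y2) \<leftarrow> D y])" .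
qed

lemma psil_counit: "sum_list (map (\<lambda>(y,x). sA (e y) x) (psil a)) = a"
  using psi_counit[of a] by (simp add: psil_def split_def o_def)

lemma psil_mult: "teq2 sH sA (psil (mA a b)) [((\<lambda>x y. mH y x) y w, mA x z). (y,x) \<leftarrow> psil a, (w,z) \<leftarrow> psil b]"
proof (rule teq2_I)
  fix f assume f: "bilin sH sA f"
  show "sum_list (map (\<lambda>z. f (fst z) (snd z)) (psil (mA a b))) = sum_list (map (\<lambda>z. f (fst z) (snd z)) [((\<lambda>x y. mH y x) y w, mA x z). (y,x) \<leftarrow> psil a, (w,z) \<leftarrow> psil b])"
    unfolding psil_sum
    apply (subst psi_mult_tr[OF vs_field, of "\<lambda>v w. f (Si w) v"])
    using f apply (simp_all add: ls bilin_simps)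
    by (simp add: psil_def sum_list_concat_map split_def o_def Si_anti)
qed

lemma psil_unit: "teq2 sH sA (psil uA) [(uH, uA)]"
proof (rule teq2_I)
  fix f assume f: "bilin sH sA f"
  show "sum_list (map (\<lambda>z. f (fst z) (snd z)) (psil uA)) = sum_list (map (\<lambda>z. f (fst z) (snd z)) [(uH, uA)])"
    unfolding psil_sum
    by (subst psi_unit_tr[OF vs_field, of "\<lambda>v w. f (Si w) v"]) (use f in \<open>simp_all add: ls bilin_simps\<close>)
qed

lemma psil_act: "teq2 sH sA (psil (pil k a)) (map (\<lambda>(y,x). (y, pil k x)) (psil a))"
proof (rule teq2_I)
  fix f assume f: "bilin sH sA f"
  show "sum_list (map (\<lambda>z. f (fst z) (snd z)) (psil (pil k a))) = sum_list (map (\<lambda>z. f (fst z) (snd z)) (map (\<lambda>(y,x). (y, pil k x)) (psil a)))"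
    unfolding psil_sum pil_def
    apply (subst psi_act_tr[OF vs_field, of "\<lambda>v w. f (Si w) v"])
    using f apply (simp_all add: ls bilin_simps)
    by (simp add: psil_def split_def o_def)
qed


lemma lam_alt: "lam a = sum_list (map (\<lambda>z. act (fst z) (Si (snd z))) (psi a))"
  by (simp add: lam_def split_def)
lemma laminv_alt: "laminv a = sum_list (map (\<lambda>z. act (fst z) (snd z)) (psi a))"
  by (simp add: laminv_def split_def)

lemmas lsA = lin2 kpush Si_anti

lemma lam_lin: "klinear sA sA lam"
  unfolding lam_alt by (rule psi_tr_lin[OF vsA]) (simp_all add: lsA)
lemma laminv_lin: "klinear sA sA laminv"
  unfolding laminv_alt by (rule psi_tr_lin[OF vsA]) (simp_all add: lsA)

lemma lam_uA: "lam uA = uA"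
  unfolding lam_alt by (subst psi_unit_tr[OF vsA]) (simp_all add: lsA)

lemma laminv_lam: "laminv (lam a) = a"
proof -
  have "laminv (lam a) = sum_list (map (\<lambda>z. laminv (act (fst z) (Si (snd z)))) (psi a))"
    unfolding lam_alt by (rule klin_sum[OF laminv_lin])
  also have "\<dots> = sum_list (map (\<lambda>z. sum_list (map (\<lambda>w. act (fst w) (mH (Si (snd z)) (snd w))) (psi (fst z)))) (psi a))"
    unfolding laminv_alt by (subst psi_act_tr[OF vsA]) (simp_all add: lsA act_m)
  also have "\<dots> = sum_list (map (\<lambda>z. sum_list (map (\<lambda>q. act (fst z) (mH (Si (snd q)) (fst q))) (D (snd z)))) (psi a))"
    by (rule psi_coass_tr[OF vsA, of "\<lambda>x y1 y2. act x (mH (Si y2) y1)"]) (simp_all add: lsA)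
  also have "\<dots> = sum_list (map (\<lambda>z. sA (e (snd z)) (fst z)) (psi a))"
    by (rule sum_cong, subst antiSi2_tr[of sA "act _"]) (simp_all add: lsA)
  also have "\<dots> = a" using psi_counit_tr[OF vsA, of "\<lambda>x. x" a] by (simp add: klinear_def)
  finally show ?thesis .
qed

lemma lam_laminv: "lam (laminv a) = a"
proof -
  have "lam (laminv a) = sum_list (map (\<lambda>z. lam (act (fst z) (snd z))) (psi a))"
    unfolding laminv_alt by (rule klin_sum[OF lam_lin])
  also have "\<dots> = sum_list (map (\<lambda>z. sum_list (map (\<lambda>w. act (fst w) (mH (snd z) (Si (snd w)))) (psi (fst z)))) (psi a))"
    unfolding lam_alt by (subst psi_act_tr[OF vsA]) (simp_all add: lsA act_m)
  also have "\<dots> = sum_list (map (\<lambda>z. sum_list (map (\<lambda>q. act (fst z) (mH (snd q) (Si (fst q)))) (D (snd z)))) (psi a))"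
    by (rule psi_coass_tr[OF vsA, of "\<lambda>x y1 y2. act x (mH y2 (Si y1))"]) (simp_all add: lsA)
  also have "\<dots> = sum_list (map (\<lambda>z. sA (e (snd z)) (fst z)) (psi a))"
    by (rule sum_cong, subst antiSi1_tr[of sA "act _"]) (simp_all add: lsA)
  also have "\<dots> = a" using psi_counit_tr[OF vsA, of "\<lambda>x. x" a] by (simp add: klinear_def)
  finally show ?thesis .
qed


lemma Si_coanti_tr:
  assumes vT: "vector_space sT" and l1: "\<And>w. klinear sH sT (\<lambda>v. F v w)" and l2: "\<And>v. klinear sH sT (\<lambda>w. F v w)"
  shows "sum_list (map (\<lambda>t. F (fst t) (snd t)) (D (Si h))) = sum_list (map (\<lambda>t. F (Si (snd t)) (Si (fst t))) (D h))"
  using teq2_tr[OF Si_coanti vT l1 l2] by (simp add: split_def o_def)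

lemma mA_sumR: "mA x (sum_list (map f xs)) = sum_list (map (\<lambda>i. mA x (f i)) xs)"
  by (rule klin_sum[of sA sA]) (simp add: klinear_def)
lemma mA_sumL: "mA (sum_list (map f xs)) y = sum_list (map (\<lambda>i. mA (f i) y) xs)"
  by (rule klin_sum[of sA sA]) (simp add: klinear_def)

lemma lam_mult: "lam (right_twisted_prod mA act psi a b) = left_twisted_prod mA pil psil (lam a) (lam b)"
proof -
  define Y where "Y = lam b"
  have rhs0: "left_twisted_prod mA pil psil (lam a) Y = sum_list (map (\<lambda>w. mA (fst w) (act Y (Si (snd w)))) (psi (lam a)))"
    by (simp add: left_twisted_prod_def pil_def psil_def split_def o_def)
  have glin: "klinear sA sA (\<lambda>x. sum_list (map (\<lambda>w. mA (fst w) (act Y (Si (snd w)))) (psi x)))"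
    by (rule psi_tr_lin[OF vsA]) (simp_all add: lsA)
  have R1: "left_twisted_prod mA pil psil (lam a) Y = sum_list (map (\<lambda>z. sum_list (map (\<lambda>w.
       mA (act (fst w) (Si (snd z))) (act Y (Si (snd w)))) (psi (fst z)))) (psi a))"
    unfolding rhs0 unfolding lam_alt[of a] klin_sum[OF glin]
    by (rule sum_cong, rule psi_act_tr[OF vsA]) (simp_all add: lsA)
  have R2: "left_twisted_prod mA pil psil (lam a) Y = sum_list (map (\<lambda>z. sum_list (map (\<lambda>q.
       mA (act (fst z) (Si (snd q))) (act Y (Si (fst q)))) (D (snd z)))) (psi a))"
    unfolding R1
    by (rule psi_coass_tr[OF vsA, of "\<lambda>x y1 y2. mA (act x (Si y2)) (act Y (Si y1))"]) (simp_all add: lsA)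
  have R3: "left_twisted_prod mA pil psil (lam a) (lam b) = sum_list (map (\<lambda>z. sum_list (map (\<lambda>q. sum_list (map (\<lambda>v.
       mA (act (fst z) (Si (snd q))) (act (fst v) (mH (Si (snd v)) (Si (fst q))))) (psi b))) (D (snd z)))) (psi a))"
    unfolding R2[unfolded Y_def] unfolding lam_alt[of b] by (simp add: act_sumL mA_sumR act_m)
  have L1: "lam (right_twisted_prod mA act psi a b) = sum_list (map (\<lambda>p. sum_list (map (\<lambda>v. sum_list (map (\<lambda>q.
       act (mA (act (fst p) (snd v)) (fst q)) (mH (Si (snd q)) (Si (snd p)))) (psi (fst v)))) (psi b))) (psi a))"
  proof -
    have "lam (right_twisted_prod mA act psi a b) = sum_list (map (\<lambda>v. lam (mA (act a (snd v)) (fst v))) (psi b))"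
      by (simp add: right_twisted_prod_def split_def klin_sum[OF lam_lin])
    also have "\<dots> = sum_list (map (\<lambda>v. sum_list (map (\<lambda>p. sum_list (map (\<lambda>q.
       act (mA (act (fst p) (snd v)) (fst q)) (mH (Si (snd q)) (Si (snd p)))) (psi (fst v)))) (psi a))) (psi b))"
    proof (rule sum_cong)
      fix v :: "'a \<times> 'h"
      have "lam (mA (act a (snd v)) (fst v)) = sum_list (map (\<lambda>p. sum_list (map (\<lambda>q.
         act (mA (fst p) (fst q)) (mH (Si (snd q)) (Si (snd p)))) (psi (fst v)))) (psi (act a (snd v))))"
        unfolding lam_alt by (subst psi_mult_tr[OF vsA]) (simp_all add: lsA)
      also have "\<dots> = sum_list (map (\<lambda>p. sum_list (map (\<lambda>q.
         act (mA (act (fst p) (snd v)) (fst q)) (mH (Si (snd q)) (Si (snd p)))) (psi (fst v)))) (psi a))"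
        by (rule psi_act_tr[OF vsA, of "\<lambda>x y. sum_list (map (\<lambda>q. act (mA x (fst q)) (mH (Si (snd q)) (Si y))) (psi (fst v)))"])
          (simp_all add: lsA)
      finally show "lam (mA (act a (snd v)) (fst v)) = \<dots>" .
    qed
    also have "\<dots> = sum_list (map (\<lambda>p. sum_list (map (\<lambda>v. sum_list (map (\<lambda>q.
       act (mA (act (fst p) (snd v)) (fst q)) (mH (Si (snd q)) (Si (snd p)))) (psi (fst v)))) (psi b))) (psi a))"
      by (rule swap2)
    finally show ?thesis .
  qed
  have L2: "lam (right_twisted_prod mA act psi a b) = sum_list (map (\<lambda>p. sum_list (map (\<lambda>v. sum_list (map (\<lambda>r.
       act (mA (act (fst p) (snd r)) (fst v)) (mH (Si (fst r)) (Si (snd p)))) (D (snd v)))) (psi b))) (psi a))"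
    unfolding L1
    apply (rule sum_cong)
    subgoal for p
      by (rule psi_coass_tr[OF vsA, of "\<lambda>x y1 y2. act (mA (act (fst p) y2) x) (mH (Si y1) (Si (snd p)))"]) (simp_all add: lsA)
    done
  have T: "act (mA (act x1 r2) v1) (mH (Si r1) (Si p2)) = sum_list (map (\<lambda>c. sum_list (map (\<lambda>d.
      mA (act x1 (mH r2 (mH (Si (snd d)) (Si (snd c))))) (act v1 (mH (Si (fst d)) (Si (fst c))))) (D r1))) (D p2))"
    for x1 r1 r2 v1 p2
  proof -
    have "act (mA (act x1 r2) v1) (mH (Si r1) (Si p2)) = act (mA (act x1 r2) v1) (Si (mH p2 r1))" by (simp add: Si_anti)
    also have "\<dots> = sum_list (map (\<lambda>t. mA (act (act x1 r2) (fst t)) (act v1 (snd t))) (D (Si (mH p2 r1))))"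
      by (simp add: act_mA split_def)
    also have "\<dots> = sum_list (map (\<lambda>t. mA (act (act x1 r2) (Si (snd t))) (act v1 (Si (fst t)))) (D (mH p2 r1)))"
      by (rule Si_coanti_tr[OF vsA, of "\<lambda>v w. mA (act (act x1 r2) v) (act v1 w)"]) (simp_all add: lsA)
    also have "\<dots> = sum_list (map (\<lambda>c. sum_list (map (\<lambda>d.
       mA (act (act x1 r2) (Si (mH (snd c) (snd d)))) (act v1 (Si (mH (fst c) (fst d))))) (D r1))) (D p2))"
      by (rule Dm_tr[OF vsA, of "\<lambda>v w. mA (act (act x1 r2) (Si w)) (act v1 (Si v))"]) (simp_all add: lsA)
    also have "\<dots> = sum_list (map (\<lambda>c. sum_list (map (\<lambda>d.
      mA (act x1 (mH r2 (mH (Si (snd d)) (Si (snd c))))) (act v1 (mH (Si (fst d)) (Si (fst c))))) (D r1))) (D p2))"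
      by (simp add: Si_anti act_m)
    finally show ?thesis .
  qed
  have L3: "lam (right_twisted_prod mA act psi a b) = sum_list (map (\<lambda>p. sum_list (map (\<lambda>v. sum_list (map (\<lambda>r.
       sum_list (map (\<lambda>d. sum_list (map (\<lambda>c.
      mA (act (fst p) (mH (snd r) (mH (Si (snd d)) (Si (snd c))))) (act (fst v) (mH (Si (fst d)) (Si (fst c)))))
       (D (snd p)))) (D (fst r)))) (D (snd v)))) (psi b))) (psi a))"
    unfolding L2 T by (intro sum_cong) (rule swap2)
  have L4: "lam (right_twisted_prod mA act psi a b) = sum_list (map (\<lambda>p. sum_list (map (\<lambda>v. sum_list (map (\<lambda>r.
       sum_list (map (\<lambda>d. sum_list (map (\<lambda>c.
      mA (act (fst p) (mH (snd d) (mH (Si (fst d)) (Si (snd c))))) (act (fst v) (mH (Si (fst r)) (Si (fst c)))))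
       (D (snd p)))) (D (snd r)))) (D (snd v)))) (psi b))) (psi a))"
    unfolding L3
    apply (rule sum_cong, rule sum_cong)
    subgoal for p v
      by (rule coass_tr[OF vsA, of "\<lambda>x y z. sum_list (map (\<lambda>c.
          mA (act (fst p) (mH z (mH (Si y) (Si (snd c))))) (act (fst v) (mH (Si x) (Si (fst c))))) (D (snd p)))" "snd v"])
        (simp_all add: lsA)
    done
  have AS: "sum_list (map (\<lambda>d. mA (act x (mH (snd d) (mH (Si (fst d)) y))) z) (D h)) = sA (e h) (mA (act x y) z)" for x y z h
    using antiSi1_tr[of sA "\<lambda>w. mA (act x (mH w y)) z" h] by (simp add: lsA m_assoc)
  have L5: "lam (right_twisted_prod mA act psi a b) = sum_list (map (\<lambda>p. sum_list (map (\<lambda>v. sum_list (map (\<lambda>r.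
       sum_list (map (\<lambda>c. sA (e (snd r))
      (mA (act (fst p) (Si (snd c))) (act (fst v) (mH (Si (fst r)) (Si (fst c))))))
       (D (snd p)))) (D (snd v)))) (psi b))) (psi a))"
  proof -
    have "lam (right_twisted_prod mA act psi a b) = sum_list (map (\<lambda>p. sum_list (map (\<lambda>v. sum_list (map (\<lambda>r.
       sum_list (map (\<lambda>c. sum_list (map (\<lambda>d.
      mA (act (fst p) (mH (snd d) (mH (Si (fst d)) (Si (snd c))))) (act (fst v) (mH (Si (fst r)) (Si (fst c)))))
       (D (snd r)))) (D (snd p)))) (D (snd v)))) (psi b))) (psi a))"
      unfolding L4 by (intro sum_cong) (rule swap2)
    then show ?thesis by (simp only: AS)
  qed
  have L6: "lam (right_twisted_prod mA act psi a b) = sum_list (map (\<lambda>p. sum_list (map (\<lambda>v.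
       sum_list (map (\<lambda>c. mA (act (fst p) (Si (snd c))) (act (fst v) (mH (Si (snd v)) (Si (fst c)))))
       (D (snd p)))) (psi b))) (psi a))"
    unfolding L5
    apply (rule sum_cong, rule sum_cong)
    subgoal for p v
      by (rule trans[OF _ counit_tr2[OF vsA, of "\<lambda>w. sum_list (map (\<lambda>c. mA (act (fst p) (Si (snd c))) (act (fst v) (mH (Si w) (Si (fst c)))))
       (D (snd p)))" "snd v"]]) (simp_all add: lsA)
    done
  show ?thesis unfolding L6 R3 by (intro sum_cong) (rule swap2)
qed


lemma ltd: "left_twisting_datum sA mA uA sH (\<lambda>x y. mH y x) uH D e pil psil"
  unfolding left_twisting_datum_def
  using kalgA bialg_op psil_add psil_scale psil_coass psil_counit psil_mult psil_unit psil_act act_linA act_linH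
  by (simp add: pil_def act_m act_mA act_uA)

lemma final_loc:
  assumes d1: "pil' \<equiv> (\<lambda>h a. act a h)" and d2: "psil' \<equiv> (\<lambda>a. map (\<lambda>(x,y). (inv S y, x)) (psi a))"
    and d3: "lam' \<equiv> (\<lambda>a. sum_list (map (\<lambda>(x,y). act x (inv S y)) (psi a)))"
    and d4: "laminv' \<equiv> (\<lambda>a. sum_list (map (\<lambda>(x,y). act x y) (psi a)))"
  shows "left_twisting_datum sA mA uA sH (\<lambda>x y. mH y x) uH D e pil' psil'
     \<and> klinear sA sA lam'
     \<and> (\<forall>a b. lam' (right_twisted_prod mA act psi a b) = left_twisted_prod mA pil' psil' (lam' a) (lam' b))
     \<and> lam' uA = uA
     \<and> bij lam'
     \<and> (\<forall>a. laminv' (lam' a) = a \<and> lam' (laminv' a) = a)"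
proof -
  have eqs: "pil' = pil" "psil' = psil" "lam' = lam" "laminv' = laminv"
    unfolding d1 d2 d3 d4 by (simp_all add: pil_def psil_def lam_def laminv_def Si_def fun_eq_iff)
  have bj: "bij lam"
    unfolding bij_def inj_def surj_def by (metis laminv_lam lam_laminv)
  show ?thesis unfolding eqs using ltd lam_lin lam_mult lam_uA bj laminv_lam lam_laminv by blast
qed

end

theorem theorem4p8:
  fixes sA :: "'k::field \<Rightarrow> 'a::ab_group_add \<Rightarrow> 'a" and mA :: "'a \<Rightarrow> 'a \<Rightarrow> 'a" and uA :: 'a
    and sH :: "'k \<Rightarrow> 'h::ab_group_add \<Rightarrow> 'h" and mH :: "'h \<Rightarrow> 'h \<Rightarrow> 'h" and uH :: 'h
    and D :: "'h \<Rightarrow> ('h \<times> 'h) list" and e :: "'h \<Rightarrow> 'k" and S :: "'h \<Rightarrow> 'h"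
    and act :: "'a \<Rightarrow> 'h \<Rightarrow> 'a" and psi :: "'a \<Rightarrow> ('a \<times> 'h) list"
  assumes "right_twisting_datum sA mA uA sH mH uH D e act psi"
    and "hopf sH mH uH D e S"
    and "bij S"
  defines "pil \<equiv> (\<lambda>h a. act a h)"
    and "psil \<equiv> (\<lambda>a. map (\<lambda>(x,y). (inv S y, x)) (psi a))"
    and "lam \<equiv> (\<lambda>a. sum_list (map (\<lambda>(x,y). act x (inv S y)) (psi a)))"
    and "laminv \<equiv> (\<lambda>a. sum_list (map (\<lambda>(x,y). act x y) (psi a)))"
  shows "left_twisting_datum sA mA uA sH (\<lambda>x y. mH y x) uH D e pil psil
     \<and> klinear sA sA lam
     \<and> (\<forall>a b. lam (right_twisted_prod mA act psi a b) = left_twisted_prod mA pil psil (lam a) (lam b))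
     \<and> lam uA = uA
     \<and> bij lam
     \<and> (\<forall>a. laminv (lam a) = a \<and> lam (laminv a) = a)"
proof -
  interpret T: TD sH mH uH D e S sA mA uA act psi
    by unfold_locales (use assms(1-3) in auto)
  show ?thesis by (rule T.final_loc) (fact pil_def psil_def lam_def laminv_def)+
qed

end
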